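(* Every finitely generated countable profinite completely regular semigroup is finite.
   Context: A profinite semigroup is a compact (Hausdorff) topological semigroup that is residually finite, i.e. any two distinct elements are separated by a continuous homomorphism onto a finite discrete semigroup. It is finitely generated if some finite subset generates a dense subsemigroup. A semigroup is completely regular if each of its elements lies in a subgroup. *)

theory Defs
  imports "HOL-Analysis.Analysis"
begin

definition subsemigroup_generated :: "'a::semigroup_mult set \<Rightarrow> 'a set" where
  "subsemigroup_generated F =
     \<Inter> {S. F \<subseteq> S \<and> (\<forall>x\<in>S. \<forall>y\<in>S. x * y \<in> S)}"

definition is_subgroup :: "'a::semigroup_mult set \<Rightarrow> bool" where
  "is_subgroup H \<longleftrightarrow>
     (\<forall>x\<in>H. \<forall>y\<in>H. x * y \<in> H) \<and>
     (\<exists>e\<in>H. (\<forall>h\<in>H. e * h = h \<and> h * e = h) \<and>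
              (\<forall>h\<in>H. \<exists>g\<in>H. h * g = e \<and> g * h = e))"

definition completely_regular :: "'a::semigroup_mult itself \<Rightarrow> bool" where
  "completely_regular _ \<longleftrightarrow> (\<forall>x::'a. \<exists>H. x \<in> H \<and> is_subgroup H)"

text \<open>A finite (discrete) semigroup is represented, up to isomorphism, by a
  finite carrier T of natural numbers with an associative operation on T.\<close>
definition finite_semigroup :: "nat set \<Rightarrow> (nat \<Rightarrow> nat \<Rightarrow> nat) \<Rightarrow> bool" where
  "finite_semigroup T op \<longleftrightarrow> finite T \<and>
     (\<forall>a\<in>T. \<forall>b\<in>T. op a b \<in> T) \<and>
     (\<forall>a\<in>T. \<forall>b\<in>T. \<forall>c\<in>T. op (op a b) c = op a (op b c))"

text \<open>Continuous homomorphism from the topological semigroup 'a onto a finite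
  discrete semigroup (T, op): continuity into a discrete space means every
  fibre is open.\<close>
definition cont_hom_onto_finite ::
    "('a::{semigroup_mult,topological_space} \<Rightarrow> nat) \<Rightarrow> nat set \<Rightarrow> (nat \<Rightarrow> nat \<Rightarrow> nat) \<Rightarrow> bool" where
  "cont_hom_onto_finite f T op \<longleftrightarrow> finite_semigroup T op \<and>
     range f = T \<and> (\<forall>x y. f (x * y) = op (f x) (f y)) \<and>
     (\<forall>t. open (f -` {t}))"

definition profinite_semigroup :: "'a::{semigroup_mult,topological_space} itself \<Rightarrow> bool" where
  "profinite_semigroup _ \<longleftrightarrow>
     compact (UNIV :: 'a set) \<and>
     (\<forall>x y :: 'a. x \<noteq> y \<longrightarrow> (\<exists>U V. open U \<and> open V \<and> x \<in> U \<and> y \<in> V \<and> U \<inter> V = {})) \<and>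
     continuous_on UNIV (\<lambda>p :: 'a \<times> 'a. fst p * snd p) \<and>
     (\<forall>x y :: 'a. x \<noteq> y \<longrightarrow>
        (\<exists>f T op. cont_hom_onto_finite f T op \<and> f x \<noteq> f y))"

definition finitely_generated_top :: "'a::{semigroup_mult,topological_space} itself \<Rightarrow> bool" where
  "finitely_generated_top _ \<longleftrightarrow>
     (\<exists>F :: 'a set. finite F \<and> closure (subsemigroup_generated F) = UNIV)"

end

theory Submission
  imports Defs
begin

lemma haus_euc:
  assumes "\<forall>x y :: 'a::topological_space. x \<noteq> y \<longrightarrow> (\<exists>U V. open U \<and> open V \<and> x \<in> U \<and> y \<in> V \<and> U \<inter> V = {})"
  shows "Hausdorff_space (euclidean :: 'a topology)"
  using assms unfolding Hausdorff_space_def disjnt_def by auto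

lemma compact_closed_H:
  assumes "Hausdorff_space (euclidean :: 'a::topological_space topology)" "compact (K::'a set)"
  shows "closed K"
  using compactin_imp_closedin[OF assms(1)] assms(2) by simp

lemma finite_closed_H:
  assumes "Hausdorff_space (euclidean :: 'a::topological_space topology)" "finite (K::'a set)"
  shows "closed K"
  using compact_closed_H[OF assms(1)] finite_imp_compact[OF assms(2)] by blast

lemma cont_left:
  assumes "continuous_on UNIV (\<lambda>p :: 'a::{semigroup_mult,topological_space} \<times> 'a. fst p * snd p)"
  shows "continuous_on UNIV (\<lambda>t::'a. p * t)"
proof -
  have "continuous_on UNIV ((\<lambda>p :: 'a \<times> 'a. fst p * snd p) \<circ> (\<lambda>t. (p, t)))"
    by (rule continuous_on_compose[OF continuous_on_Pair[OF continuous_on_const continuous_on_id]])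
       (rule continuous_on_subset[OF assms], simp)
  then show ?thesis by (simp add: o_def)
qed

lemma cont_right:
  assumes "continuous_on UNIV (\<lambda>p :: 'a::{semigroup_mult,topological_space} \<times> 'a. fst p * snd p)"
  shows "continuous_on UNIV (\<lambda>t::'a. t * p)"
proof -
  have "continuous_on UNIV ((\<lambda>p :: 'a \<times> 'a. fst p * snd p) \<circ> (\<lambda>t. (t, p)))"
    by (rule continuous_on_compose[OF continuous_on_Pair[OF continuous_on_id continuous_on_const]])
       (rule continuous_on_subset[OF assms], simp)
  then show ?thesis by (simp add: o_def)
qed

lemma closed_rideal:
  assumes H: "Hausdorff_space (euclidean :: 'a::{semigroup_mult,topological_space} topology)"
    and c: "compact (UNIV :: 'a set)"
    and m: "continuous_on UNIV (\<lambda>p :: 'a \<times> 'a. fst p * snd p)"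
  shows "closed {z::'a. \<exists>t. z = p * t}"
proof -
  have "{z::'a. \<exists>t. z = p * t} = (\<lambda>t. p * t) ` UNIV" by auto
  moreover have "compact ((\<lambda>t. p * t) ` UNIV)"
    by (rule compact_continuous_image[OF cont_left[OF m] c])
  ultimately show ?thesis using compact_closed_H[OF H] by simp
qed

lemma closed_lideal:
  assumes H: "Hausdorff_space (euclidean :: 'a::{semigroup_mult,topological_space} topology)"
    and c: "compact (UNIV :: 'a set)"
    and m: "continuous_on UNIV (\<lambda>p :: 'a \<times> 'a. fst p * snd p)"
  shows "closed {z::'a. \<exists>t. z = t * p}"
proof -
  have "{z::'a. \<exists>t. z = t * p} = (\<lambda>t. t * p) ` UNIV" by auto
  moreover have "compact ((\<lambda>t. t * p) ` UNIV)"
    by (rule compact_continuous_image[OF cont_right[OF m] c])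
  ultimately show ?thesis using compact_closed_H[OF H] by simp
qed

lemma closed_rdiv:
  assumes H: "Hausdorff_space (euclidean :: 'a::{semigroup_mult,topological_space} topology)"
    and c: "compact (UNIV :: 'a set)"
    and m: "continuous_on UNIV (\<lambda>p :: 'a \<times> 'a. fst p * snd p)"
  shows "closed {z::'a. \<exists>t. p = z * t}"
proof -
  let ?M = "(\<lambda>q :: 'a \<times> 'a. fst q * snd q) -` {p} \<inter> UNIV"
  have "closed ?M"
    using continuous_on_closed_vimage[OF closed_UNIV, THEN iffD1, OF m, rule_format, OF finite_closed_H[OF H, of "{p}"]] by simp
  then have "compact ((UNIV \<times> UNIV) \<inter> ?M)"
    using compact_Times[OF c c] by blast
  then have "compact (fst ` ((UNIV \<times> UNIV) \<inter> ?M))"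
    by (rule compact_continuous_image[OF continuous_on_fst[OF continuous_on_id]])
  moreover have "fst ` ((UNIV \<times> UNIV) \<inter> ?M) = {z::'a. \<exists>t. p = z * t}"
  proof (intro equalityI subsetI)
    fix z assume "z \<in> {z::'a. \<exists>t. p = z * t}"
    then obtain t where "p = z * t" by auto
    then show "z \<in> fst ` ((UNIV \<times> UNIV) \<inter> ?M)" by (intro image_eqI[of _ _ "(z, t)"]) auto
  next
    fix z assume "z \<in> fst ` ((UNIV \<times> UNIV) \<inter> ?M)"
    then obtain q where "q \<in> ?M" "z = fst q" by auto
    then show "z \<in> {z::'a. \<exists>t. p = z * t}" by (cases q) auto
  qed
  ultimately show ?thesis using compact_closed_H[OF H] by simp
qed

lemma closed_ldiv:
  assumes H: "Hausdorff_space (euclidean :: 'a::{semigroup_mult,topological_space} topology)"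
    and c: "compact (UNIV :: 'a set)"
    and m: "continuous_on UNIV (\<lambda>p :: 'a \<times> 'a. fst p * snd p)"
  shows "closed {z::'a. \<exists>t. p = t * z}"
proof -
  let ?M = "(\<lambda>q :: 'a \<times> 'a. fst q * snd q) -` {p} \<inter> UNIV"
  have "closed ?M"
    using continuous_on_closed_vimage[OF closed_UNIV, THEN iffD1, OF m, rule_format, OF finite_closed_H[OF H, of "{p}"]] by simp
  then have "compact ((UNIV \<times> UNIV) \<inter> ?M)"
    using compact_Times[OF c c] by blast
  then have "compact (snd ` ((UNIV \<times> UNIV) \<inter> ?M))"
    by (rule compact_continuous_image[OF continuous_on_snd[OF continuous_on_id]])
  moreover have "snd ` ((UNIV \<times> UNIV) \<inter> ?M) = {z::'a. \<exists>t. p = t * z}"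
  proof (intro equalityI subsetI)
    fix z assume "z \<in> {z::'a. \<exists>t. p = t * z}"
    then obtain t where "p = t * z" by auto
    then show "z \<in> snd ` ((UNIV \<times> UNIV) \<inter> ?M)" by (intro image_eqI[of _ _ "(t, z)"]) auto
  next
    fix z assume "z \<in> snd ` ((UNIV \<times> UNIV) \<inter> ?M)"
    then obtain q where "q \<in> ?M" "z = snd q" by auto
    then show "z \<in> {z::'a. \<exists>t. p = t * z}" by (cases q) auto
  qed
  ultimately show ?thesis using compact_closed_H[OF H] by simp
qed

lemma isolated_exists:
  assumes H: "Hausdorff_space (euclidean :: 'a::topological_space topology)"
    and K: "compact (K::'a set)" "countable K" "K \<noteq> {}"
  shows "\<exists>s\<in>K. \<exists>U. open U \<and> U \<inter> K = {s}"
proof -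
  let ?X = "subtopology euclidean K"
  have cs: "compact_space ?X" using K(1) by (simp add: compact_space_subtopology)
  have hs: "Hausdorff_space ?X" using H by (simp add: Hausdorff_space_subtopology)
  have lc: "locally_compact_space ?X" using cs by (rule compact_imp_locally_compact_space)
  have rs: "regular_space ?X" using cs hs by (rule compact_Hausdorff_imp_regular_space)
  show ?thesis
  proof (rule ccontr)
    assume nex: "\<not> ?thesis"
    have "?X interior_of \<Union>((\<lambda>k. {k}) ` K) = {}"
    proof (rule Baire_category_alt)
      show "completely_metrizable_space ?X \<or> locally_compact_space ?X \<and> regular_space ?X"
        using lc rs by blast
      show "countable ((\<lambda>k. {k}) ` K)" using K(2) by simp
      fix T assume "T \<in> (\<lambda>k. {k}) ` K"
      then obtain k where k: "k \<in> K" "T = {k}" by auto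
      show "closedin ?X T \<and> ?X interior_of T = {}"
      proof
        show "closedin ?X T" using k hs by (simp add: closedin_Hausdorff_singleton)
        show "?X interior_of T = {}"
        proof (rule ccontr)
          assume "?X interior_of T \<noteq> {}"
          moreover have "?X interior_of T \<subseteq> {k}" using interior_of_subset k(2) by metis
          ultimately have "?X interior_of T = {k}" by blast
          then have "openin ?X {k}" by (metis openin_interior_of)
          then obtain U where "open U" "{k} = K \<inter> U"
            by (auto simp: openin_subtopology)
          then show False using nex k(1) by (metis inf_commute)
        qed
      qed
    qed
    moreover have "\<Union>((\<lambda>k. {k}) ` K) = K" by auto
    moreover have "?X interior_of K = K"
      by (simp add: interior_of_openin openin_subtopology_refl)
    ultimately show False using K(3) by simp
  qed
qed

lemma discrete_compact_finite:
  assumes K: "compact (K::'a::topological_space set)"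
    and iso: "\<forall>y\<in>K. \<exists>U. open U \<and> U \<inter> K = {y}"
  shows "finite K"
proof -
  obtain f where f: "\<And>y. y \<in> K \<Longrightarrow> open (f y) \<and> f y \<inter> K = {y}"
    using iso by metis
  have "K \<subseteq> (\<Union>y\<in>K. f y)" using f by blast
  then obtain C' where C': "C' \<subseteq> K" "finite C'" "K \<subseteq> (\<Union>y\<in>C'. f y)"
    using compactE_image[OF K, of K f] f by blast
  have "K \<subseteq> C'"
  proof
    fix x assume "x \<in> K"
    then obtain y where "y \<in> C'" "x \<in> f y" using C' by blast
    then have "y \<in> K" using C'(1) by blast
    then have "x \<in> f y \<inter> K" using \<open>x \<in> f y\<close> \<open>x \<in> K\<close> by blast
    then have "x = y" using f[OF \<open>y \<in> K\<close>] by blast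
    then show "x \<in> C'" using \<open>y \<in> C'\<close> by simp
  qed
  then show ?thesis using C'(2) finite_subset by blast
qed

lemma cr_elem:
  assumes "completely_regular TYPE('a::semigroup_mult)"
  shows "\<exists>e g. e * x = x \<and> x * e = x \<and> x * g = e \<and> g * x = (e::'a)"
proof -
  obtain H where "x \<in> H" "is_subgroup H" using assms unfolding completely_regular_def by blast
  then obtain e where "e \<in> H" "\<forall>h\<in>H. e * h = h \<and> h * e = h" "\<forall>h\<in>H. \<exists>g\<in>H. h * g = e \<and> g * h = e"
    unfolding is_subgroup_def by blast
  then show ?thesis using \<open>x \<in> H\<close> by blast
qed

definition leJ :: "'a::semigroup_mult \<Rightarrow> 'a \<Rightarrow> bool" where
  "leJ x y \<longleftrightarrow> (\<exists>a b. x = a * y * b)"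

context
  fixes dummy :: "'a::semigroup_mult"
  assumes cr: "completely_regular TYPE('a)"
begin

lemma leJ_refl: "leJ (x::'a) x"
proof -
  obtain e g where "e * x = x" "x * e = x" using cr_elem[OF cr, of x] by blast
  then have "x = e * x * e" by (simp add: mult.assoc)
  then show ?thesis unfolding leJ_def by blast
qed

lemma leJ_trans: "leJ (x::'a) y \<Longrightarrow> leJ y z \<Longrightarrow> leJ x z"
  unfolding leJ_def proof (elim exE)
  fix a b c d assume "x = a * y * b" "y = c * z * d"
  then have "x = (a * c) * z * (d * b)" by (simp add: mult.assoc)
  then show "\<exists>a b. x = a * z * b" by blast
qed

lemma leJ_multR: "leJ ((x::'a) * y) x"
proof -
  obtain e g where "e * x = x" using cr_elem[OF cr, of x] by blast
  then have "x * y = e * x * y" by simp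
  then show ?thesis unfolding leJ_def by blast
qed

lemma leJ_multL: "leJ ((x::'a) * y) y"
proof -
  obtain e g where "y * e = y" using cr_elem[OF cr, of y] by blast
  then have "x * y = x * y * e" by (simp add: mult.assoc)
  then show ?thesis unfolding leJ_def by blast
qed

lemma leJ_swap: "leJ ((a::'a) * b) (b * a)"
proof -
  obtain e g where "e * (a * b) = a * b" "g * (a * b) = e" using cr_elem[OF cr, of "a * b"] by blast
  then have "a * b = (g * (a * b)) * (a * b)" by simp
  also have "\<dots> = (g * a) * (b * a) * b" by (simp add: mult.assoc)
  finally have "a * b = (g * a) * (b * a) * b" .
  then show ?thesis unfolding leJ_def by blast
qed

lemma leJ_K: assumes "leJ (x::'a) y" shows "leJ x (x * y)"
proof -
  obtain a b where ab: "x = a * y * b" using assms unfolding leJ_def by blast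
  obtain e g where "e * x = x" "g * x = e" using cr_elem[OF cr, of x] by blast
  then have "x = (g * x) * x" by simp
  also have "\<dots> = g * ((x * a) * y) * b" by (subst ab) (simp add: mult.assoc)
  finally have "x = g * ((x * a) * y) * b" .
  then have 1: "leJ x ((x * a) * y)" unfolding leJ_def by blast
  have 2: "leJ ((x * a) * y) (y * (x * a))" by (rule leJ_swap)
  have 3: "leJ (y * (x * a)) (y * x)" using leJ_multR[of "y * x" a] by (simp add: mult.assoc)
  have 4: "leJ (y * x) (x * y)" by (rule leJ_swap)
  show ?thesis using 1 2 3 4 leJ_trans by blast
qed

lemma leJ_K': assumes "leJ (x::'a) y" shows "leJ x (y * x)"
proof -
  obtain a b where ab: "x = a * y * b" using assms unfolding leJ_def by blast
  obtain e g where "x * e = x" "x * g = e" using cr_elem[OF cr, of x] by blast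
  then have "x = x * (x * g)" by simp
  also have "\<dots> = a * (y * (b * x)) * g" by (subst ab) (simp add: mult.assoc)
  finally have "x = a * (y * (b * x)) * g" .
  then have 1: "leJ x (y * (b * x))" unfolding leJ_def by blast
  have 2: "leJ (y * (b * x)) ((b * x) * y)" by (rule leJ_swap)
  have 3: "leJ ((b * x) * y) (x * y)" using leJ_multL[of b "x * y"] by (simp add: mult.assoc)
  have 4: "leJ (x * y) (y * x)" by (rule leJ_swap)
  show ?thesis using 1 2 3 4 leJ_trans by blast
qed

lemma leJ_mult: assumes "leJ (x::'a) y1" "leJ x y2" shows "leJ x (y1 * y2)"
proof -
  have 1: "leJ x (x * y1)" using leJ_K[OF assms(1)] .
  have "leJ (x * y1) y2" using leJ_trans[OF leJ_multR assms(2)] .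
  then have 2: "leJ (x * y1) (x * y1 * y2)" by (rule leJ_K)
  have 3: "leJ (x * y1 * y2) (y1 * y2)" using leJ_multL[of x "y1 * y2"] by (simp add: mult.assoc)
  show ?thesis using 1 2 3 leJ_trans by blast
qed

lemma R_lemma: assumes "leJ (p::'a) (p * v)" shows "\<exists>t. p = p * v * t"
proof -
  obtain s t' where st: "p = s * (p * v) * t'" using assms unfolding leJ_def by blast
  define u where "u = v * t'"
  obtain e g where eg: "u * e = u" "u * g = e" using cr_elem[OF cr, of u] by blast
  have pu: "p = s * p * u" using st u_def by (simp add: mult.assoc)
  have "p * e = (s * p * u) * e" using pu by (rule arg_cong)
  also have "\<dots> = s * p * (u * e)" by (simp add: mult.assoc)
  also have "\<dots> = p" using eg pu by simp
  finally have "p * e = p" .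
  then have "p = p * (u * g)" using eg by simp
  then have "p = p * v * (t' * g)" using u_def by (simp add: mult.assoc)
  then show ?thesis by blast
qed

lemma L_lemma: assumes "leJ (q::'a) (v * q)" shows "\<exists>t. q = t * (v * q)"
proof -
  obtain s t' where st: "q = s * (v * q) * t'" using assms unfolding leJ_def by blast
  define u where "u = s * v"
  obtain e g where eg: "e * u = u" "g * u = e" using cr_elem[OF cr, of u] by blast
  have qu: "q = u * q * t'" using st u_def by (simp add: mult.assoc)
  have "e * q = e * (u * q * t')" using qu by (rule arg_cong)
  also have "\<dots> = (e * u) * q * t'" by (simp add: mult.assoc)
  also have "\<dots> = q" using eg qu by simp
  finally have "e * q = q" .
  then have "q = (g * u) * q" using eg by simp
  then have "q = (g * s) * (v * q)" using u_def by (simp add: mult.assoc)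
  then show ?thesis by blast
qed

end

abbreviation gen where "gen \<equiv> subsemigroup_generated"

lemma gen_base: "C \<subseteq> gen C"
  unfolding subsemigroup_generated_def by blast

lemma gen_mult: "x \<in> gen C \<Longrightarrow> y \<in> gen C \<Longrightarrow> x * y \<in> gen C"
  unfolding subsemigroup_generated_def by blast

lemma gen_induct: "x \<in> gen C \<Longrightarrow> C \<subseteq> S \<Longrightarrow> (\<forall>x\<in>S. \<forall>y\<in>S. x * y \<in> S) \<Longrightarrow> x \<in> S"
  unfolding subsemigroup_generated_def by blast

lemma gen_mono: "C \<subseteq> D \<Longrightarrow> gen C \<subseteq> gen D"
  unfolding subsemigroup_generated_def by blast

inductive Wr :: "'a::semigroup_mult \<Rightarrow> 'a set \<Rightarrow> bool" where
  Wr_base: "Wr c {c}"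
| Wr_step: "Wr x D \<Longrightarrow> Wr (x * c) (insert c D)"

inductive Wl :: "'a::semigroup_mult \<Rightarrow> 'a set \<Rightarrow> bool" where
  Wl_base: "Wl c {c}"
| Wl_step: "Wl x D \<Longrightarrow> Wl (c * x) (insert c D)"

lemma Wr_gen: "Wr x D \<Longrightarrow> x \<in> gen D"
proof (induction rule: Wr.induct)
  case (Wr_base c) then show ?case using gen_base by blast
next
  case (Wr_step x D c)
  have "x \<in> gen (insert c D)" using Wr_step.IH gen_mono[of D "insert c D"] by blast
  moreover have "c \<in> gen (insert c D)" using gen_base by blast
  ultimately show ?case by (rule gen_mult)
qed

lemma Wl_gen: "Wl x D \<Longrightarrow> x \<in> gen D"
proof (induction rule: Wl.induct)
  case (Wl_base c) then show ?case using gen_base by blast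
next
  case (Wl_step x D c)
  have "x \<in> gen (insert c D)" using Wl_step.IH gen_mono[of D "insert c D"] by blast
  moreover have "c \<in> gen (insert c D)" using gen_base by blast
  ultimately show ?case using gen_mult by blast
qed

lemma Wr_app: "Wr y E \<Longrightarrow> Wr x D \<Longrightarrow> Wr (x * y) (D \<union> E)"
proof (induction y E rule: Wr.induct)
  case (Wr_base c) then show ?case using Wr_step[of x D c] by simp
next
  case (Wr_step y E c)
  have "Wr (x * y * c) (insert c (D \<union> E))" using Wr.Wr_step[OF Wr_step.IH[OF Wr_step.prems]] .
  then show ?case by (simp add: mult.assoc)
qed

lemma Wl_app: "Wl x D \<Longrightarrow> Wl y E \<Longrightarrow> Wl (x * y) (D \<union> E)"
proof (induction x D rule: Wl.induct)
  case (Wl_base c) then show ?case using Wl_step[of y E c] by simp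
next
  case (Wl_step x D c)
  have "Wl (c * (x * y)) (insert c (D \<union> E))" using Wl.Wl_step[OF Wl_step.IH[OF Wl_step.prems]] .
  then show ?case by (simp add: mult.assoc)
qed

lemma gen_Wr: "x \<in> gen C \<Longrightarrow> \<exists>D\<subseteq>C. Wr x D"
proof -
  assume "x \<in> gen C"
  moreover have "C \<subseteq> {x. \<exists>D\<subseteq>C. Wr x D}" using Wr_base by blast
  moreover have "\<forall>x\<in>{x. \<exists>D\<subseteq>C. Wr x D}. \<forall>y\<in>{x. \<exists>D\<subseteq>C. Wr x D}. x * y \<in> {x. \<exists>D\<subseteq>C. Wr x D}"
  proof (intro ballI)
    fix x y assume "x \<in> {x. \<exists>D\<subseteq>C. Wr x D}" "y \<in> {x. \<exists>D\<subseteq>C. Wr x D}"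
    then obtain D E where "D \<subseteq> C" "Wr x D" "E \<subseteq> C" "Wr y E" by blast
    then have "Wr (x * y) (D \<union> E)" "D \<union> E \<subseteq> C" using Wr_app[of y E x D] by auto
    then show "x * y \<in> {x. \<exists>D\<subseteq>C. Wr x D}" by blast
  qed
  ultimately have "x \<in> {x. \<exists>D\<subseteq>C. Wr x D}" by (rule gen_induct)
  then show ?thesis by blast
qed

lemma gen_Wl: "x \<in> gen C \<Longrightarrow> \<exists>D\<subseteq>C. Wl x D"
proof -
  assume "x \<in> gen C"
  moreover have "C \<subseteq> {x. \<exists>D\<subseteq>C. Wl x D}" using Wl_base by blast
  moreover have "\<forall>x\<in>{x. \<exists>D\<subseteq>C. Wl x D}. \<forall>y\<in>{x. \<exists>D\<subseteq>C. Wl x D}. x * y \<in> {x. \<exists>D\<subseteq>C. Wl x D}"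
  proof (intro ballI)
    fix x y assume "x \<in> {x. \<exists>D\<subseteq>C. Wl x D}" "y \<in> {x. \<exists>D\<subseteq>C. Wl x D}"
    then obtain D E where "D \<subseteq> C" "Wl x D" "E \<subseteq> C" "Wl y E" by blast
    then have "Wl (x * y) (D \<union> E)" "D \<union> E \<subseteq> C" using Wl_app[of x D y E] by auto
    then show "x * y \<in> {x. \<exists>D\<subseteq>C. Wl x D}" by blast
  qed
  ultimately have "x \<in> {x. \<exists>D\<subseteq>C. Wl x D}" by (rule gen_induct)
  then show ?thesis by blast
qed

lemma Wr_leJ: assumes cr: "completely_regular TYPE('a::semigroup_mult)" shows "Wr (x::'a) D \<Longrightarrow> d \<in> D \<Longrightarrow> leJ x d"
proof (induction x D rule: Wr.induct)
  case (Wr_base c) then show ?case using leJ_refl[OF cr] by auto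
next
  case (Wr_step x D c)
  show ?case
  proof (cases "d = c")
    case True then show ?thesis using leJ_multL[OF cr] by simp
  next
    case False then have "leJ x d" using Wr_step by auto
    then show ?thesis using leJ_trans[OF cr leJ_multR[OF cr]] by blast
  qed
qed

lemma Wl_leJ: assumes cr: "completely_regular TYPE('a::semigroup_mult)" shows "Wl (x::'a) D \<Longrightarrow> d \<in> D \<Longrightarrow> leJ x d"
proof (induction x D rule: Wl.induct)
  case (Wl_base c) then show ?case using leJ_refl[OF cr] by auto
next
  case (Wl_step x D c)
  show ?case
  proof (cases "d = c")
    case True then show ?thesis using leJ_multR[OF cr] by simp
  next
    case False then have "leJ x d" using Wl_step by auto
    then show ?thesis using leJ_trans[OF cr leJ_multL[OF cr]] by blast
  qed
qed

lemma full_leJ: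
  assumes cr: "completely_regular TYPE('a::semigroup_mult)"
    and full: "\<forall>c\<in>C. leJ (p::'a) c" and y: "y \<in> gen C"
  shows "leJ p y"
proof -
  have cl: "\<forall>x\<in>{y. leJ p y}. \<forall>z\<in>{y. leJ p y}. x * z \<in> {y. leJ p y}"
    using leJ_mult[OF cr, of p] by blast
  have "C \<subseteq> {y. leJ p y}" using full by blast
  from gen_induct[OF y this cl] show ?thesis by simp
qed

lemma prefix:
  assumes "Wr x D" "D = C" "\<And>D. D \<subset> C \<Longrightarrow> gen D \<subseteq> F"
  shows "\<exists>p. Wr p C \<and> (p \<in> C \<or> p \<in> (\<lambda>(f, c). f * c) ` (F \<times> C)) \<and> (x = p \<or> (\<exists>v. x = p * v))"
  using assms
proof (induction x D rule: Wr.induct)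
  case (Wr_base c)
  then show ?case using Wr.Wr_base[of c] by auto
next
  case (Wr_step x D c)
  show ?case
  proof (cases "D = C")
    case True
    then obtain p where p: "Wr p C" "p \<in> C \<or> p \<in> (\<lambda>(f, c). f * c) ` (F \<times> C)" "x = p \<or> (\<exists>v. x = p * v)"
      using Wr_step.IH Wr_step.prems(2) by blast
    have "x * c = p * c \<or> (\<exists>v. x * c = p * v * c)" using p(3) by blast
    then have "\<exists>v. x * c = p * v" by (auto simp: mult.assoc)
    then show ?thesis using p by blast
  next
    case False
    then have "D \<subset> C" using Wr_step.prems(1) by blast
    then have "x \<in> F" using Wr_gen[OF Wr_step.hyps] Wr_step.prems(2) by blast
    moreover have "c \<in> C" using Wr_step.prems(1) by blast
    ultimately have "x * c \<in> (\<lambda>(f, c). f * c) ` (F \<times> C)" by force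
    then show ?thesis using Wr.Wr_step[OF Wr_step.hyps, of c] Wr_step.prems(1) by blast
  qed
qed

lemma suffix:
  assumes "Wl x D" "D = C" "\<And>D. D \<subset> C \<Longrightarrow> gen D \<subseteq> F"
  shows "\<exists>q. Wl q C \<and> (q \<in> C \<or> q \<in> (\<lambda>(c, f). c * f) ` (C \<times> F)) \<and> (x = q \<or> (\<exists>v. x = v * q))"
  using assms
proof (induction x D rule: Wl.induct)
  case (Wl_base c)
  then show ?case using Wl.Wl_base[of c] by auto
next
  case (Wl_step x D c)
  show ?case
  proof (cases "D = C")
    case True
    then obtain q where q: "Wl q C" "q \<in> C \<or> q \<in> (\<lambda>(c, f). c * f) ` (C \<times> F)" "x = q \<or> (\<exists>v. x = v * q)"
      using Wl_step.IH Wl_step.prems(2) by blast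
    have "c * x = c * q \<or> (\<exists>v. c * x = c * (v * q))" using q(3) by blast
    then have "\<exists>v. c * x = v * q" by (auto simp: mult.assoc[symmetric])
    then show ?thesis using q by blast
  next
    case False
    then have "D \<subset> C" using Wl_step.prems(1) by blast
    then have "x \<in> F" using Wl_gen[OF Wl_step.hyps] Wl_step.prems(2) by blast
    moreover have "c \<in> C" using Wl_step.prems(1) by blast
    ultimately have "c * x \<in> (\<lambda>(c, f). c * f) ` (C \<times> F)" by force
    then show ?thesis using Wl.Wl_step[OF Wl_step.hyps, of c] Wl_step.prems(1) by blast
  qed
qed

lemma X_finite:
  assumes H: "Hausdorff_space (euclidean :: 'a::{semigroup_mult,topological_space} topology)"
    and c: "compact (UNIV :: 'a set)"
    and m: "continuous_on UNIV (\<lambda>p :: 'a \<times> 'a. fst p * snd p)"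
    and cnt: "countable (UNIV :: 'a set)"
  shows "finite {z::'a. (\<exists>t. z = p * t) \<and> (\<exists>t. p = z * t) \<and> (\<exists>t. z = t * q) \<and> (\<exists>t. q = t * z)}"
proof -
  define X where "X = {z::'a. (\<exists>t. z = p * t) \<and> (\<exists>t. p = z * t) \<and> (\<exists>t. z = t * q) \<and> (\<exists>t. q = t * z)}"
  have memX: "z \<in> X \<longleftrightarrow> (\<exists>t. z = p * t) \<and> (\<exists>t. p = z * t) \<and> (\<exists>t. z = t * q) \<and> (\<exists>t. q = t * z)" for z
    unfolding X_def by simp
  have eq: "X = {z::'a. \<exists>t. z = p * t} \<inter> {z. \<exists>t. p = z * t} \<inter> {z. \<exists>t. z = t * q} \<inter> {z. \<exists>t. q = t * z}"
    unfolding X_def by blast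
  have "closed X" unfolding eq
    by (intro closed_Int closed_rideal[OF H c m] closed_rdiv[OF H c m] closed_lideal[OF H c m]
      closed_ldiv[OF H c m])
  then have "compact (UNIV \<inter> X)" by (rule compact_Int_closed[OF c])
  then have cX: "compact X" by simp
  have "finite X"
  proof (cases "X = {}")
    case True then show ?thesis by simp
  next
    case False
    have "countable X" using countable_subset[OF subset_UNIV cnt] .
    from isolated_exists[OF H cX this False] obtain s where sX: "s \<in> X" and "\<exists>U. open U \<and> U \<inter> X = {s}"
      by (rule bexE)
    then obtain U where U: "open U" "U \<inter> X = {s}" by (elim exE conjE)
    have "\<forall>y\<in>X. \<exists>V. open V \<and> V \<inter> X = {y}"
    proof
      fix y assume yX: "y \<in> X"
      obtain a1 where a1: "s = p * a1" using sX memX by blast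
      obtain b1 where b1: "p = y * b1" using yX memX by blast
      obtain a2 where a2: "y = p * a2" using yX memX by blast
      obtain b2 where b2: "p = s * b2" using sX memX by blast
      define t where "t = b1 * a1"
      define t' where "t' = b2 * a2"
      have st: "s = y * t" unfolding t_def a1 by (subst b1) (simp add: mult.assoc)
      have yt: "y = s * t'" unfolding t'_def a2 by (subst b2) (simp add: mult.assoc)
      define V where "V = (\<lambda>z. z * t) -` U"
      have "open (V \<inter> UNIV)"
        using continuous_on_open_vimage[OF open_UNIV, THEN iffD1, OF cont_right[OF m, of t], rule_format, OF U(1)]
        by (simp add: V_def)
      then have oV: "open V" by simp
      have "V \<inter> X = {y}"
      proof (intro equalityI subsetI)
        fix z assume "z \<in> V \<inter> X"
        then have zV: "z * t \<in> U" and zX: "z \<in> X" by (auto simp: V_def)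
        obtain c1 where c1: "z = c1 * q" using zX memX by blast
        obtain d1 where d1: "q = d1 * y" using yX memX by blast
        define w where "w = c1 * d1"
        have zw: "z = w * y" unfolding w_def c1 by (subst d1) (simp add: mult.assoc)
        have ztt: "z * t * t' = z"
        proof -
          have "z * t * t' = w * (y * t) * t'" using zw by (simp add: mult.assoc)
          also have "\<dots> = w * (s * t')" using st by (simp add: mult.assoc)
          also have "\<dots> = w * y" using yt by simp
          also have "\<dots> = z" using zw by simp
          finally show ?thesis .
        qed
        have zt1: "\<exists>r. z * t = p * r"
        proof -
          obtain a3 where "z = p * a3" using zX memX by blast
          then have "z * t = p * (a3 * t)" by (simp add: mult.assoc)
          then show ?thesis by blast
        qed
        have zt2: "\<exists>r. p = z * t * r"
        proof -
          obtain b3 where b3: "p = z * b3" using zX memX by blast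
          have "z * t * (t' * b3) = (z * t * t') * b3" by (simp add: mult.assoc)
          also have "\<dots> = z * b3" using ztt by simp
          finally have "p = z * t * (t' * b3)" using b3 by simp
          then show ?thesis by blast
        qed
        have zt3: "\<exists>r. z * t = r * q"
        proof -
          obtain c4 where c4: "s = c4 * q" using sX memX by blast
          have "z * t = w * (y * t)" using zw by (simp add: mult.assoc)
          also have "\<dots> = w * s" using st by simp
          also have "\<dots> = (w * c4) * q" using c4 by (simp add: mult.assoc)
          finally show ?thesis by blast
        qed
        have zt4: "\<exists>r. q = r * (z * t)"
        proof -
          obtain d4 where d4: "q = d4 * s" using sX memX by blast
          obtain c5 where c5: "y = c5 * q" using yX memX by blast
          obtain d5 where d5: "q = d5 * z" using zX memX by blast
          have "q = d4 * s" by (rule d4)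
          also have "\<dots> = d4 * (y * t)" using st by simp
          also have "\<dots> = d4 * ((c5 * q) * t)" using c5 by simp
          also have "\<dots> = d4 * ((c5 * (d5 * z)) * t)" using d5 by simp
          also have "\<dots> = (d4 * c5 * d5) * (z * t)" by (simp add: mult.assoc)
          finally show ?thesis by blast
        qed
        have "z * t \<in> X" using memX zt1 zt2 zt3 zt4 by blast
        then have "z * t \<in> U \<inter> X" using zV by blast
        then have "z * t = s" using U(2) by blast
        then have "z = s * t'" using ztt by simp
        then show "z \<in> {y}" using yt by simp
      next
        fix z assume "z \<in> {y}"
        then have "z = y" by simp
        moreover have "y * t \<in> U" using st U(2) sX by blast
        ultimately show "z \<in> V \<inter> X" using yX by (simp add: V_def)
      qed
      then show "\<exists>V. open V \<and> V \<inter> X = {y}" using oV by blast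
    qed
    then show ?thesis by (rule discrete_compact_finite[OF cX])
  qed
  then show ?thesis unfolding X_def .
qed

lemma gen_fin:
  assumes H: "Hausdorff_space (euclidean :: 'a::{semigroup_mult,topological_space} topology)"
    and c: "compact (UNIV :: 'a set)"
    and m: "continuous_on UNIV (\<lambda>p :: 'a \<times> 'a. fst p * snd p)"
    and cnt: "countable (UNIV :: 'a set)"
    and cr: "completely_regular TYPE('a)"
  shows "finite C \<Longrightarrow> finite (gen (C::'a set))"
proof (induction C rule: finite_psubset_induct)
  case (psubset C)
  define F where "F = \<Union> (gen ` {D. D \<subset> C})"
  have "finite {D. D \<subset> C}" using psubset.hyps by (rule finite_subset[rotated, OF finite_Pow_iff[THEN iffD2]]) auto
  then have Ffin: "finite F" unfolding F_def using psubset.IH by blast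
  have FD: "\<And>D. D \<subset> C \<Longrightarrow> gen D \<subseteq> F" unfolding F_def by blast
  define P where "P = {p. Wr p C \<and> (p \<in> C \<or> p \<in> (\<lambda>(f, c). f * c) ` (F \<times> C))}"
  define Q where "Q = {q. Wl q C \<and> (q \<in> C \<or> q \<in> (\<lambda>(c, f). c * f) ` (C \<times> F))}"
  have "P \<subseteq> C \<union> (\<lambda>(f, c). f * c) ` (F \<times> C)" unfolding P_def by blast
  then have Pfin: "finite P" using psubset.hyps Ffin by (meson finite_SigmaI finite_UnI finite_imageI finite_subset)
  have "Q \<subseteq> C \<union> (\<lambda>(c, f). c * f) ` (C \<times> F)" unfolding Q_def by blast
  then have Qfin: "finite Q" using psubset.hyps Ffin by (meson finite_SigmaI finite_UnI finite_imageI finite_subset)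
  define X where "X = (\<lambda>p q. {z::'a. (\<exists>t. z = p * t) \<and> (\<exists>t. p = z * t) \<and> (\<exists>t. z = t * q) \<and> (\<exists>t. q = t * z)})"
  have Xfin: "finite (X p q)" for p q unfolding X_def by (rule X_finite[OF H c m cnt])
  have cover: "gen C \<subseteq> F \<union> (\<Union>p\<in>P. \<Union>q\<in>Q. X p q)"
  proof
    fix x assume x: "x \<in> gen C"
    show "x \<in> F \<union> (\<Union>p\<in>P. \<Union>q\<in>Q. X p q)"
    proof (cases "x \<in> F")
      case True then show ?thesis by blast
    next
      case False
      obtain D where D: "D \<subseteq> C" "Wr x D" using gen_Wr[OF x] by blast
      have "D = C"
      proof (rule ccontr)
        assume "D \<noteq> C"
        then have "D \<subset> C" using D(1) by blast
        then have "x \<in> F" using FD Wr_gen[OF D(2)] by blast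
        then show False using False by blast
      qed
      then obtain p where p: "Wr p C" "p \<in> C \<or> p \<in> (\<lambda>(f, c). f * c) ` (F \<times> C)" "x = p \<or> (\<exists>v. x = p * v)"
        using prefix[OF D(2) _ FD] by blast
      obtain D' where D': "D' \<subseteq> C" "Wl x D'" using gen_Wl[OF x] by blast
      have "D' = C"
      proof (rule ccontr)
        assume "D' \<noteq> C"
        then have "D' \<subset> C" using D'(1) by blast
        then have "x \<in> F" using FD Wl_gen[OF D'(2)] by blast
        then show False using False by blast
      qed
      then obtain q where q: "Wl q C" "q \<in> C \<or> q \<in> (\<lambda>(c, f). c * f) ` (C \<times> F)" "x = q \<or> (\<exists>v. x = v * q)"
        using suffix[OF D'(2) _ FD] by blast
      have pP: "p \<in> P" unfolding P_def using p(1,2) by blast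
      have qQ: "q \<in> Q" unfolding Q_def using q(1,2) by blast
      have lp: "leJ p x" using full_leJ[OF cr _ x] Wr_leJ[OF cr p(1)] by blast
      have lq: "leJ q x" using full_leJ[OF cr _ x] Wl_leJ[OF cr q(1)] by blast
      obtain ep gp where ep: "p * ep = p" using cr_elem[OF cr, of p] by blast
      obtain eq gq where eq: "eq * q = q" using cr_elem[OF cr, of q] by blast
      have r1: "\<exists>t. x = p * t" using p(3) ep by (metis)
      have r2: "\<exists>t. p = x * t"
      proof (cases "x = p")
        case True then show ?thesis using ep by metis
      next
        case False
        then obtain v where v: "x = p * v" using p(3) by blast
        then have "leJ p (p * v)" using lp by simp
        from R_lemma[OF cr this] obtain t where "p = p * v * t" by blast
        then show ?thesis using v by blast
      qed
      have l1: "\<exists>t. x = t * q" using q(3) eq by (metis)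
      have l2: "\<exists>t. q = t * x"
      proof (cases "x = q")
        case True then show ?thesis using eq by metis
      next
        case False
        then obtain v where v: "x = v * q" using q(3) by blast
        then have "leJ q (v * q)" using lq by simp
        from L_lemma[OF cr this] obtain t where "q = t * (v * q)" by blast
        then show ?thesis using v by blast
      qed
      have "x \<in> X p q" unfolding X_def using r1 r2 l1 l2 by blast
      then show ?thesis using pP qQ by blast
    qed
  qed
  show ?case
    by (rule finite_subset[OF cover]) (use Ffin Pfin Qfin Xfin in blast)
qed

theorem corollary3p11:
  assumes "profinite_semigroup TYPE('a::{semigroup_mult,topological_space})"
    and "finitely_generated_top TYPE('a)"
    and "countable (UNIV :: 'a set)"
    and "completely_regular TYPE('a)"
  shows "finite (UNIV :: 'a set)"
proof -
  have c: "compact (UNIV :: 'a set)"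
    and h: "\<forall>x y :: 'a. x \<noteq> y \<longrightarrow> (\<exists>U V. open U \<and> open V \<and> x \<in> U \<and> y \<in> V \<and> U \<inter> V = {})"
    and m: "continuous_on UNIV (\<lambda>p :: 'a \<times> 'a. fst p * snd p)"
    using assms(1) unfolding profinite_semigroup_def by blast+
  have H: "Hausdorff_space (euclidean :: 'a topology)" by (rule haus_euc[OF h])
  obtain A :: "'a set" where A: "finite A" "closure (gen A) = UNIV"
    using assms(2) unfolding finitely_generated_top_def by blast
  have fin: "finite (gen A)" by (rule gen_fin[OF H c m assms(3) assms(4) A(1)])
  then have "closed (gen A)" by (rule finite_closed_H[OF H])
  then have "gen A = UNIV" using A(2) closure_closed by metis
  then show ?thesis using fin by simp
qed

end
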